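(* Let $\lambda\in\mathbb{C}$ with $|\lambda|>1$, and let $g,h\in \mathrm{SL}(2,\mathbb{C})$ be $$g=\begin{pmatrix}\lambda&0\\0&\lambda^{-1}\end{pmatrix},\qquad h=\begin{pmatrix}a&b\\c&d\end{pmatrix}.$$ Put $M_g=|\lambda-1|+|\lambda^{-1}-1|$ and suppose $M_g<1$. If the subgroup $\langle g,h\rangle$ is discrete and non-elementary, then $$|abcd|^{1/2}\neq \frac{1-M_g}{M_g^2}.$$
   Context: A subgroup of $\mathrm{SL}(2,\mathbb{C})$ is discrete if it is discrete in the matrix topology. It is elementary if its action on $\mathbb{H}^3\cup\partial\mathbb{H}^3$ (via Möbius transformations) has a finite orbit; otherwise it is non-elementary. Since $|\lambda|>1$, $g$ is loxodromic. *)

theory Defs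
  imports "HOL-Analysis.Analysis"
begin

type_synonym cmat2 = "complex^2^2"

definition mat2 :: "complex \<Rightarrow> complex \<Rightarrow> complex \<Rightarrow> complex \<Rightarrow> cmat2" where
  "mat2 a b c d = (\<chi> i j. if i = 1 then (if j = 1 then a else b) else (if j = 1 then c else d))"

definition SL2C :: "cmat2 set" where
  "SL2C = {A. det A = 1}"

inductive_set gen_subgroup :: "cmat2 set \<Rightarrow> cmat2 set" for S where
  gen_one: "mat 1 \<in> gen_subgroup S"
| gen_base: "A \<in> S \<Longrightarrow> A \<in> gen_subgroup S"
| gen_mult: "A \<in> gen_subgroup S \<Longrightarrow> B \<in> gen_subgroup S \<Longrightarrow> A ** B \<in> gen_subgroup S"
| gen_inv: "A \<in> gen_subgroup S \<Longrightarrow> matrix_inv A \<in> gen_subgroup S"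

definition discrete_group :: "cmat2 set \<Rightarrow> bool" where
  "discrete_group G \<longleftrightarrow> (\<forall>A\<in>G. \<exists>e>0. \<forall>B\<in>G. dist B A < e \<longrightarrow> B = A)"

text \<open>Points of the closed upper half-space model of H^3 \<union> \<partial>H^3:
  HPt z t with t > 0 is an interior point, HPt z 0 is the boundary point z \<in> C,
  HInf is the boundary point \<infinity>.\<close>
datatype hpoint = HInf | HPt complex real

definition hspace :: "hpoint set" where
  "hspace = insert HInf {HPt z t | z t. t \<ge> 0}"

text \<open>Action of a matrix [[a,b],[c,d]] by the Poincare extension of the Moebius map.\<close>
fun mobius_act :: "cmat2 \<Rightarrow> hpoint \<Rightarrow> hpoint" where
  "mobius_act A HInf =
     (let a = A$1$1; c = A$2$1 in if c = 0 then HInf else HPt (a / c) 0)"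
| "mobius_act A (HPt z t) =
     (let a = A$1$1; b = A$1$2; c = A$2$1; d = A$2$2;
          D = (cmod (c*z + d))\<^sup>2 + (cmod c)\<^sup>2 * t\<^sup>2 in
      if D = 0 then HInf
      else HPt (((a*z + b) * cnj (c*z + d) + a * cnj c * complex_of_real (t\<^sup>2)) / complex_of_real D)
               (t / D))"

definition elementary :: "cmat2 set \<Rightarrow> bool" where
  "elementary G \<longleftrightarrow> (\<exists>x\<in>hspace. finite ((\<lambda>A. mobius_act A x) ` G))"

end

theory Submission
  imports Defs
begin


lemma mat2_nth[simp]:
  "mat2 a b c d $1$1 = a" "mat2 a b c d $1$2 = b" "mat2 a b c d $2$1 = c" "mat2 a b c d $2$2 = d"
  by (simp_all add: mat2_def)

lemma mat2_eta: "A = mat2 (A$1$1) (A$1$2) (A$2$1) (A$2$2)"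
  by (simp add: vec_eq_iff forall_2)

lemma mat2_eq_iff: "mat2 a b c d = mat2 a' b' c' d' \<longleftrightarrow> a = a' \<and> b = b' \<and> c = c' \<and> d = d'"
  by (metis mat2_nth)

lemma mat2_mult: "mat2 a b c d ** mat2 e f g h = mat2 (a*e+b*g) (a*f+b*h) (c*e+d*g) (c*f+d*h)"
  by (simp add: vec_eq_iff forall_2 matrix_matrix_mult_def sum_2 mat2_def)

lemma mat2_one: "mat 1 = mat2 1 0 0 1"
  by (simp add: vec_eq_iff forall_2 mat_def mat2_def)

lemma det_mat2: "det (mat2 a b c d) = a*d - b*c"
  by (simp add: det_2)

lemma matrix_inv_eqI:
  fixes A B :: cmat2
  assumes "A ** B = mat 1" "B ** A = mat 1"
  shows "matrix_inv A = B"
proof -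
  have ex: "\<exists>A'. A ** A' = mat 1 \<and> A' ** A = mat 1" using assms by blast
  define C where "C = matrix_inv A"
  have C: "A ** C = mat 1" "C ** A = mat 1"
    using someI_ex[OF ex] unfolding C_def matrix_inv_def by auto
  have "C = C ** (A ** B)" by (simp add: assms)
  also have "\<dots> = (C ** A) ** B" by (simp add: matrix_mul_assoc)
  also have "\<dots> = B" by (simp add: C)
  finally show ?thesis unfolding C_def .
qed

lemma matrix_inv_mat2:
  assumes "a*d - b*c = 1"
  shows "matrix_inv (mat2 a b c d) = mat2 d (-b) (-c) a"
  apply (rule matrix_inv_eqI)
  using assms by (simp_all add: mat2_mult mat2_one mat2_eq_iff algebra_simps)

lemma dist_mat2:
  "dist (mat2 a b c d) (mat2 a' b' c' d') \<le> cmod (a-a') + cmod (b-b') + cmod (c-c') + cmod (d-d')"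
proof -
  have l1: "norm (x::'b::real_normed_vector^2) \<le> norm (x$1) + norm (x$2)" for x
    unfolding norm_vec_def by (rule order_trans[OF L2_set_le_sum]) (auto simp: sum_2)
  have "dist (mat2 a b c d) (mat2 a' b' c' d') = norm (mat2 a b c d - mat2 a' b' c' d')"
    by (simp add: dist_norm)
  also have "\<dots> \<le> norm ((mat2 a b c d - mat2 a' b' c' d')$1) + norm ((mat2 a b c d - mat2 a' b' c' d')$2)"
    by (rule l1)
  also have "\<dots> \<le> (cmod (a-a') + cmod (b-b')) + (cmod (c-c') + cmod (d-d'))"
    by (rule add_mono; rule order_trans[OF l1]; simp)
  finally show ?thesis by simp
qed



lemma core_bounds:
  fixes lam mu :: complex and A B C D :: "nat \<Rightarrow> complex"
  assumes lam: "cmod lam > 1" and mu: "mu = lam - inverse lam"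
    and m1: "cmod mu < 1"
    and qh: "cmod mu ^2 * (1 + cmod (A 0 * B 0 * C 0 * D 0) * cmod mu^2) < 1"
    and det: "\<And>n. A n * D n - B n * C n = 1"
    and rA: "\<And>n. A (Suc n) = lam + B n * C n * mu"
    and rD: "\<And>n. D (Suc n) = inverse lam - B n * C n * mu"
    and rB: "\<And>n. B (Suc n) = - A n * B n * mu"
    and rC: "\<And>n. C (Suc n) = C n * D n * mu"
  shows "\<exists>K r. r < 1 \<and> (\<forall>n. cmod (A(2*n+1) - lam) + cmod (inverse lam ^(2*n) * B(2*n+1))
           + cmod (lam^(2*n) * C(2*n+1)) + cmod (D(2*n+1) - inverse lam) \<le> K * r^n)"
proof -
  define m where "m = cmod mu"
  define Y where "Y n = A n * B n * C n * D n" for n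
  define X where "X n = B n * C n" for n
  define z0 where "z0 = cmod (Y 0) * m^2"
  define q where "q = m^2 * (1 + z0)"
  define L where "L = cmod lam"
  have L1: "L > 1" using lam L_def by simp
  have lam0: "lam \<noteq> 0" using lam by auto
  have m0: "0 \<le> m" "m < 1" using m1 m_def by auto
  have z00: "0 \<le> z0" unfolding z0_def by simp
  have q1: "q < 1" using qh unfolding q_def z0_def Y_def m_def by simp
  have q0: "0 \<le> q" unfolding q_def using z00 by simp
  have m2q: "m^2 \<le> q" unfolding q_def using z00 by (simp add: mult_left_mono[of 1 "1+z0" "m^2", simplified])
  have BC: "X (Suc n) = - Y n * mu^2" for n
    by (simp add: X_def Y_def rB rC power2_eq_square algebra_simps)
  have YS: "Y (Suc n) = - Y n * mu^2 * (1 - Y n * mu^2)" for n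
  proof -
    have "A (Suc n) * D (Suc n) = 1 + X (Suc n)" using det[of "Suc n"] by (simp add: X_def algebra_simps)
    moreover have "Y (Suc n) = (A (Suc n) * D (Suc n)) * X (Suc n)" by (simp add: Y_def X_def algebra_simps)
    ultimately have "Y (Suc n) = (1 + X (Suc n)) * X (Suc n)" by simp
    thus ?thesis by (simp add: BC algebra_simps)
  qed
  have zb: "cmod (Y n) * m^2 \<le> z0 * q^n" for n
  proof (induction n)
    case 0 thus ?case by (simp add: z0_def)
  next
    case (Suc n)
    define w where "w = cmod (Y n) * m^2"
    have w0: "0 \<le> w" unfolding w_def by simp
    have "q^n \<le> 1" using q0 q1 by (simp add: power_le_one)
    hence "z0 * q^n \<le> z0" using z00 by (simp add: mult_left_le)
    hence wz: "w \<le> z0" using Suc w_def by linarith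
    have "cmod (Y (Suc n)) * m^2 = w * m^2 * cmod (1 - Y n * mu^2)"
      by (simp add: YS w_def m_def norm_mult norm_power)
    also have "\<dots> \<le> w * m^2 * (1 + w)"
    proof -
      have "cmod (1 - Y n * mu^2) \<le> 1 + w"
        using norm_triangle_ineq4[of 1 "Y n * mu^2"] by (simp add: w_def m_def norm_mult norm_power)
      thus ?thesis using w0 by (simp add: mult_left_mono)
    qed
    also have "\<dots> \<le> (z0 * q^n) * m^2 * (1 + z0)"
    proof -
      have h1: "w * m^2 \<le> (z0 * q^n) * m^2" using Suc by (simp add: w_def mult_right_mono)
      have h2: "1 + w \<le> 1 + z0" using wz by simp
      have h3: "0 \<le> (z0 * q^n) * m^2" using z00 q0 by simp
      have h4: "0 \<le> 1 + w" using w0 by simp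
      show ?thesis by (rule mult_mono[OF h1 h2 h3 h4])
    qed
    also have "\<dots> = z0 * q^Suc n" by (simp add: q_def)
    finally show ?case .
  qed
  define Q where "Q = cmod (X 0) + z0 / q"
  have qpos: "q > 0"
  proof -
    have "mu \<noteq> 0"
    proof
      assume "mu = 0"
      hence "lam * lam = 1" using mu lam0 by (simp add: field_simps)
      hence "L * L = 1" unfolding L_def by (metis norm_mult norm_one)
      moreover have "1 * 1 < L * L" using L1 by (intro mult_strict_mono) auto
      ultimately show False by simp
    qed
    hence "m > 0" by (simp add: m_def)
    thus ?thesis using m2q by (meson order_less_le_trans zero_less_power)
  qed
  have Eb: "cmod (X n) \<le> Q * q^n" for n
  proof (cases n)
    case 0 thus ?thesis using z00 qpos by (simp add: Q_def)
  next
    case (Suc k)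
    have "cmod (X n) = cmod (Y k) * m^2" by (simp add: Suc BC norm_mult norm_power m_def)
    also have "\<dots> \<le> z0 * q^k" by (rule zb)
    also have "\<dots> = (z0/q) * q^n" using qpos by (simp add: Suc)
    also have "\<dots> \<le> Q * q^n" by (intro mult_right_mono) (auto simp: Q_def q0)
    finally show ?thesis .
  qed
  define T where "T = Q / (1 - q)"
  have Q0: "0 \<le> Q" unfolding Q_def using z00 q0 by simp
  have sumE: "(\<Sum>k<n. cmod (X k)) \<le> T" for n
  proof -
    have "(\<Sum>k<n. cmod (X k)) \<le> (\<Sum>k<n. Q * q^k)" by (rule sum_mono) (rule Eb)
    also have "\<dots> = Q * (1 - q^n) / (1 - q)" using q1 by (simp add: sum_distrib_left[symmetric] sum_gp_strict)
    also have "\<dots> \<le> T" unfolding T_def using q1 q0 Q0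
      by (intro divide_right_mono) (auto simp: mult_left_le)
    finally show ?thesis .
  qed
  have Bb: "cmod (B (Suc n)) \<le> cmod (B 1) * (L*m)^n * exp (\<Sum>k<n. cmod (X k))" for n
  proof (induction n)
    case 0 thus ?case by simp
  next
    case (Suc n)
    have a: "cmod (A (Suc n)) \<le> L * exp (cmod (X n))"
    proof -
      have "cmod (A (Suc n)) \<le> L + cmod (X n) * m"
        using norm_triangle_ineq[of lam "X n * mu"] by (simp add: rA X_def L_def m_def norm_mult)
      also have "\<dots> \<le> L * (1 + cmod (X n))"
      proof -
        have "cmod (X n) * m \<le> cmod (X n)" using m0 by (simp add: mult_left_le)
        moreover have "1 * cmod (X n) \<le> L * cmod (X n)" using L1 by (intro mult_right_mono) auto
        ultimately show ?thesis by (simp add: distrib_left)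
      qed
      also have "\<dots> \<le> L * exp (cmod (X n))" using L1 by (simp add: exp_ge_add_one_self)
      finally show ?thesis .
    qed
    have "cmod (B (Suc (Suc n))) = cmod (A (Suc n)) * m * cmod (B (Suc n))"
      by (simp add: rB[of "Suc n"] norm_mult m_def)
    also have "\<dots> \<le> (L * exp (cmod (X n))) * m * (cmod (B 1) * (L*m)^n * exp (\<Sum>k<n. cmod (X k)))"
      by (intro mult_mono a Suc) (use m0 L1 in auto)
    also have "\<dots> = cmod (B 1) * (L*m)^Suc n * exp (\<Sum>k<Suc n. cmod (X k))"
      by (simp add: exp_add algebra_simps)
    finally show ?case .
  qed
  have Cb: "cmod (C (Suc n)) \<le> cmod (C 1) * (m/L)^n * exp (L * (\<Sum>k<n. cmod (X k)))" for n
  proof (induction n)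
    case 0 thus ?case by simp
  next
    case (Suc n)
    have a: "cmod (D (Suc n)) \<le> (1/L) * exp (L * cmod (X n))"
    proof -
      have "cmod (D (Suc n)) \<le> 1/L + cmod (X n) * m"
        using norm_triangle_ineq4[of "inverse lam" "X n * mu"]
        by (simp add: rD X_def L_def m_def norm_mult norm_inverse divide_inverse)
      also have "\<dots> \<le> (1/L) * (1 + L * cmod (X n))"
      proof -
        have "cmod (X n) * m \<le> cmod (X n)" using m0 by (simp add: mult_left_le)
        moreover have "(1/L) * (L * cmod (X n)) = cmod (X n)" using L1 by simp
        ultimately show ?thesis by (simp add: distrib_left)
      qed
      also have "\<dots> \<le> (1/L) * exp (L * cmod (X n))" using L1
        by (intro mult_left_mono) (auto simp: exp_ge_add_one_self)
      finally show ?thesis .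
    qed
    have "cmod (C (Suc (Suc n))) = cmod (D (Suc n)) * m * cmod (C (Suc n))"
      by (simp add: rC[of "Suc n"] norm_mult m_def)
    also have "\<dots> \<le> ((1/L) * exp (L * cmod (X n))) * m * (cmod (C 1) * (m/L)^n * exp (L * (\<Sum>k<n. cmod (X k))))"
      by (intro mult_mono a Suc) (use m0 L1 in auto)
    also have "\<dots> = cmod (C 1) * (m/L)^Suc n * exp (L * (\<Sum>k<Suc n. cmod (X k)))"
      by (simp add: exp_add algebra_simps)
    finally show ?case .
  qed
  define K where "K = 2 * Q + cmod (B 1) * exp T + cmod (C 1) * exp (L * T)"
  have "cmod (A(2*n+1) - lam) + cmod (inverse lam ^(2*n) * B(2*n+1))
           + cmod (lam^(2*n) * C(2*n+1)) + cmod (D(2*n+1) - inverse lam) \<le> K * q^n" for n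
  proof -
    have qq: "q^(2*n) \<le> q^n" using q0 q1 by (simp add: power_decreasing)
    have mq: "m^(2*n) \<le> q^n" using m2q m0 by (simp add: power_mult power_mono)
    have e1: "cmod (A(2*n+1) - lam) \<le> Q * q^n"
    proof -
      have "cmod (A(2*n+1) - lam) = cmod (X (2*n)) * m" by (simp add: rA X_def norm_mult m_def)
      also have "\<dots> \<le> cmod (X (2*n))" using m0 by (simp add: mult_left_le)
      also have "\<dots> \<le> Q * q^(2*n)" by (rule Eb)
      also have "\<dots> \<le> Q * q^n" using qq Q0 by (simp add: mult_left_mono)
      finally show ?thesis .
    qed
    have e4: "cmod (D(2*n+1) - inverse lam) \<le> Q * q^n"
    proof -
      have "cmod (D(2*n+1) - inverse lam) = cmod (X (2*n)) * m" by (simp add: rD X_def norm_mult m_def)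
      also have "\<dots> \<le> cmod (X (2*n))" using m0 by (simp add: mult_left_le)
      also have "\<dots> \<le> Q * q^(2*n)" by (rule Eb)
      also have "\<dots> \<le> Q * q^n" using qq Q0 by (simp add: mult_left_mono)
      finally show ?thesis .
    qed
    have e2: "cmod (inverse lam ^(2*n) * B(2*n+1)) \<le> cmod (B 1) * exp T * q^n"
    proof -
      have "cmod (inverse lam ^(2*n) * B(2*n+1)) = (1/L)^(2*n) * cmod (B (Suc (2*n)))"
        by (simp add: norm_mult norm_power norm_inverse L_def divide_inverse)
      also have "\<dots> \<le> (1/L)^(2*n) * (cmod (B 1) * (L*m)^(2*n) * exp T)"
      proof -
        have "exp (\<Sum>k<2*n. cmod (X k)) \<le> exp T" using sumE[of "2*n"] by simp
        hence "cmod (B 1) * (L*m)^(2*n) * exp (\<Sum>k<2*n. cmod (X k)) \<le> cmod (B 1) * (L*m)^(2*n) * exp T"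
          using L1 m0 by (intro mult_left_mono) auto
        thus ?thesis using Bb[of "2*n"] by (intro mult_left_mono) auto
      qed
      also have "\<dots> = cmod (B 1) * exp T * m^(2*n) * ((1/L)^(2*n) * L^(2*n))"
        by (simp add: power_mult_distrib algebra_simps)
      also have "\<dots> = cmod (B 1) * exp T * m^(2*n)"
        using L1 by (simp add: power_one_over)
      also have "\<dots> \<le> cmod (B 1) * exp T * q^n" using mq by (simp add: mult_left_mono)
      finally show ?thesis .
    qed
    have e3: "cmod (lam ^(2*n) * C(2*n+1)) \<le> cmod (C 1) * exp (L*T) * q^n"
    proof -
      have "cmod (lam ^(2*n) * C(2*n+1)) = L^(2*n) * cmod (C (Suc (2*n)))"
        by (simp add: norm_mult norm_power L_def)
      also have "\<dots> \<le> L^(2*n) * (cmod (C 1) * (m/L)^(2*n) * exp (L*T))"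
      proof -
        have "exp (L * (\<Sum>k<2*n. cmod (X k))) \<le> exp (L*T)" using sumE[of "2*n"] L1 by simp
        hence "cmod (C 1) * (m/L)^(2*n) * exp (L * (\<Sum>k<2*n. cmod (X k))) \<le> cmod (C 1) * (m/L)^(2*n) * exp (L*T)"
          using L1 m0 by (intro mult_left_mono) auto
        thus ?thesis using Cb[of "2*n"] L1 by (intro mult_left_mono) auto
      qed
      also have "\<dots> = cmod (C 1) * exp (L*T) * m^(2*n) * (L^(2*n) / L^(2*n))"
        by (simp add: power_divide algebra_simps)
      also have "\<dots> = cmod (C 1) * exp (L*T) * m^(2*n)"
        using L1 by simp
      also have "\<dots> \<le> cmod (C 1) * exp (L*T) * q^n" using mq by (simp add: mult_left_mono)
      finally show ?thesis .
    qed
    show ?thesis using e1 e2 e3 e4 unfolding K_def by (simp add: algebra_simps)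
  qed
  thus ?thesis using q1 by blast
qed



lemma nondisc:
  assumes "discrete_group G" "P \<in> G" "\<And>n. S n \<in> G" "\<And>n. S n \<noteq> P"
    "\<And>n. dist (S n) P \<le> K * r^n" "r < (1::real)"
  shows False
proof -
  obtain e where e: "e > 0" "\<And>B. B \<in> G \<Longrightarrow> dist B P < e \<Longrightarrow> B = P"
    using assms(1,2) unfolding discrete_group_def by blast
  have "\<exists>n. K * r^n < e"
  proof (cases "K \<le> 0")
    case True thus ?thesis using e(1) by (intro exI[of _ 0]) simp
  next
    case False
    then obtain n where "r^n < e/K" using real_arch_pow_inv[of "e/K" r] e(1) assms(6) by auto
    hence "K * r^n < e" using False by (simp add: field_simps)
    thus ?thesis by blast
  qed
  then obtain n where "K * r^n < e" by blast
  hence "dist (S n) P < e" using assms(5)[of n] by linarith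
  thus False using e(2)[OF assms(3)] assms(4) by blast
qed

definition dg :: "complex \<Rightarrow> cmat2" where "dg p = mat2 p 0 0 (inverse p)"

lemma dg_pow:
  assumes "dg x \<in> gen_subgroup S"
  shows "dg (x^n) \<in> gen_subgroup S"
proof (induction n)
  case 0 thus ?case by (simp add: dg_def mat2_one[symmetric] gen_one)
next
  case (Suc n)
  have "dg (x^Suc n) = dg (x^n) ** dg x" by (simp add: dg_def mat2_mult mult.commute)
  thus ?case using gen_mult[OF Suc assms] by simp
qed

lemma dg_conj:
  assumes "p \<noteq> 0"
  shows "dg p ** mat2 a b c d ** dg (inverse p) = mat2 a (p^2*b) (c*inverse p^2) d"
  using assms by (simp add: dg_def mat2_mult mat2_eq_iff power2_eq_square field_simps)

primrec Hs :: "cmat2 \<Rightarrow> cmat2 \<Rightarrow> nat \<Rightarrow> cmat2" where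
  "Hs g0 h0 0 = h0"
| "Hs g0 h0 (Suc n) = Hs g0 h0 n ** g0 ** matrix_inv (Hs g0 h0 n)"

lemma Hs_in:
  assumes "g0 \<in> gen_subgroup S" "h0 \<in> gen_subgroup S"
  shows "Hs g0 h0 n \<in> gen_subgroup S"
  by (induction n) (auto intro: assms gen_mult gen_inv)

lemma step:
  fixes a b c d l :: complex
  assumes "a*d - b*c = 1" "l \<noteq> 0"
  shows "mat2 a b c d ** mat2 l 0 0 (inverse l) ** matrix_inv (mat2 a b c d) =
    mat2 (l + b*c*(l - inverse l)) (-a*b*(l-inverse l)) (c*d*(l - inverse l)) (inverse l - b*c*(l - inverse l))"
proof -
  have ad: "a*d = 1 + b*c" using assms(1) by algebra
  show ?thesis
    using assms(2) ad apply (simp add: matrix_inv_mat2[OF assms(1)] mat2_mult mat2_eq_iff field_simps)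
    by algebra
qed

lemma step_det:
  fixes a b c d l :: complex
  assumes "a*d - b*c = 1" "l \<noteq> 0"
  shows "(l + b*c*(l - inverse l)) * (inverse l - b*c*(l - inverse l)) - (-a*b*(l-inverse l)) * (c*d*(l - inverse l)) = 1"
proof -
  have li: "l * inverse l = 1" using assms(2) by simp
  show ?thesis using li assms(1) by algebra
qed



lemma Y_zero_ex:
  fixes Y :: "nat \<Rightarrow> complex"
  assumes "Y 0 \<noteq> 0" "mu \<noteq> 0" "\<And>n. Y (Suc n) = - Y n * mu^2 * (1 - Y n * mu^2)"
  shows "Y N = 0 \<Longrightarrow> \<exists>k. Y k * mu^2 = 1"
proof (induction N)
  case 0 thus ?case using assms(1) by simp
next
  case (Suc n)
  show ?case
  proof (cases "Y n = 0")
    case True thus ?thesis using Suc.IH by blast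
  next
    case False
    from Suc.prems have "- Y n * mu^2 * (1 - Y n * mu^2) = 0" using assms(3) by simp
    hence "mu = 0 \<or> Y n * mu^2 = 1" using False by auto
    thus ?thesis using assms(2) by auto
  qed
qed

theorem theorem1:
  fixes lam a b c d :: complex
  assumes "cmod lam > 1"
    and "mat2 a b c d \<in> SL2C"
    and "cmod (lam - 1) + cmod (inverse lam - 1) < 1"
    and "discrete_group (gen_subgroup {mat2 lam 0 0 (inverse lam), mat2 a b c d})"
    and "\<not> elementary (gen_subgroup {mat2 lam 0 0 (inverse lam), mat2 a b c d})"
  shows "sqrt (cmod (a*b*c*d)) \<noteq>
           (1 - (cmod (lam - 1) + cmod (inverse lam - 1))) /
             (cmod (lam - 1) + cmod (inverse lam - 1))\<^sup>2"
proof
  define M where "M = cmod (lam - 1) + cmod (inverse lam - 1)"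
  define G where "G = gen_subgroup {mat2 lam 0 0 (inverse lam), mat2 a b c d}"
  define g where "g = mat2 lam 0 0 (inverse lam)"
  define h where "h = mat2 a b c d"
  define il where "il = inverse lam"
  define mu where "mu = lam - il"
  assume eq: "sqrt (cmod (a*b*c*d)) = (1 - M) / M\<^sup>2"
  have disc: "discrete_group G" using assms(4) unfolding G_def .
  have lam0: "lam \<noteq> 0" using assms(1) by auto
  have M1: "M < 1" using assms(3) M_def by simp
  have dh: "a*d - b*c = 1" using assms(2) by (simp add: SL2C_def det_mat2)
  have lamsq: "lam * lam \<noteq> 1" "lam * lam \<noteq> -1"
  proof -
    have "cmod (lam*lam) > 1" using assms(1)
      by (simp add: norm_mult) (metis less_1_mult)
    thus "lam * lam \<noteq> 1" "lam * lam \<noteq> -1" by auto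
  qed
  have mu0: "mu \<noteq> 0" using lamsq lam0 by (auto simp: mu_def il_def field_simps)
  have tr0: "lam + il \<noteq> 0"
  proof
    assume h0: "lam + il = 0"
    have "lam * (lam + il) = lam*lam + 1" using lam0 by (simp add: il_def field_simps)
    hence "lam*lam + 1 = 0" using h0 by simp
    hence "lam*lam = -1" by (simp add: eq_neg_iff_add_eq_0)
    thus False using lamsq by simp
  qed
  have mM: "cmod mu \<le> M"
  proof -
    have "mu = (lam - 1) - (il - 1)" by (simp add: mu_def)
    thus ?thesis using norm_triangle_ineq4[of "lam - 1" "il - 1"] by (simp add: M_def il_def)
  qed
  have M0: "M > 0" proof -
    have "0 < cmod mu" using mu0 by simp
    thus ?thesis using mM by linarith
  qed
  have m1: "cmod mu < 1" using mM M1 by simp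
  have abcd: "cmod (a*b*c*d) = ((1 - M) / M\<^sup>2)^2"
    using eq by (metis norm_ge_zero real_sqrt_pow2)
  have abcd0: "a*b*c*d \<noteq> 0"
  proof
    assume "a*b*c*d = 0"
    hence "(1 - M) / M\<^sup>2 = 0" using eq by (metis norm_zero real_sqrt_zero)
    thus False using M0 M1 by simp
  qed
  have qh: "cmod mu ^2 * (1 + cmod (a*b*c*d) * cmod mu^2) < 1"
  proof -
    have m2: "cmod mu ^2 \<le> M^2" using mM by (simp add: power_mono)
    have "cmod mu ^2 * (1 + cmod (a*b*c*d) * cmod mu^2) = cmod mu^2 + cmod (a*b*c*d) * (cmod mu^2)^2"
      by (simp add: algebra_simps power2_eq_square)
    also have "\<dots> \<le> M^2 + cmod (a*b*c*d) * (M^2)^2"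
      using m2 mM by (intro add_mono mult_left_mono power_mono) auto
    also have "\<dots> = M^2 + (1-M)^2"
    proof -
      have "cmod (a*b*c*d) * (M^2)^2 = ((1-M)/M^2)^2 * (M^2)^2" by (simp only: abcd)
      also have "\<dots> = (1-M)^2" using M0 by (simp add: power_divide)
      finally show ?thesis by simp
    qed
    also have "\<dots> < 1" using M0 M1 by (simp add: power2_eq_square algebra_simps)
    finally show ?thesis .
  qed
  have gG: "g \<in> G" unfolding G_def g_def by (rule gen_base) simp
  have hG: "h \<in> G" unfolding G_def h_def by (rule gen_base) simp
  have gdg: "g = dg lam" by (simp add: g_def dg_def)
  have giG: "dg il \<in> G"
  proof -
    have "matrix_inv g = dg il" using lam0
      by (simp add: g_def dg_def il_def matrix_inv_mat2)
    thus ?thesis using gen_inv[of g] gG unfolding G_def by simp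
  qed
  have dgl: "dg (lam^n) \<in> G" for n using dg_pow gG gdg unfolding G_def by metis
  have dgi: "dg (il^n) \<in> G" for n using dg_pow giG unfolding G_def by metis
  define A where "A n = Hs g h n $1$1" for n
  define B where "B n = Hs g h n $1$2" for n
  define C where "C n = Hs g h n $2$1" for n
  define D where "D n = Hs g h n $2$2" for n
  have Heta: "Hs g h n = mat2 (A n) (B n) (C n) (D n)" for n
    unfolding A_def B_def C_def D_def by (rule mat2_eta)
  have HG: "Hs g h n \<in> G" for n using Hs_in gG hG unfolding G_def by blast
  have det: "A n * D n - B n * C n = 1" for n
  proof (induction n)
    case 0 thus ?case using dh by (simp add: A_def B_def C_def D_def h_def)
  next
    case (Suc n)
    have "Hs g h (Suc n) = mat2 (lam + B n*C n*mu) (-A n*B n*mu) (C n*D n*mu) (il - B n*C n*mu)"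
      using step[OF Suc lam0] unfolding Heta[of n, symmetric] by (simp add: g_def mu_def il_def)
    thus ?case using step_det[OF Suc lam0] unfolding A_def B_def C_def D_def
      by (simp add: mu_def il_def)
  qed
  have Hsuc: "Hs g h (Suc n) = mat2 (lam + B n*C n*mu) (-A n*B n*mu) (C n*D n*mu) (il - B n*C n*mu)" for n
    using step[OF det[of n] lam0] unfolding Heta[of n, symmetric] by (simp add: g_def mu_def il_def)
  have rA: "A (Suc n) = lam + B n * C n * mu" for n using Hsuc[of n] by (simp add: A_def)
  have rB: "B (Suc n) = - A n * B n * mu" for n using Hsuc[of n] by (simp add: B_def)
  have rC: "C (Suc n) = C n * D n * mu" for n using Hsuc[of n] by (simp add: C_def)
  have rD: "D (Suc n) = il - B n * C n * mu" for n using Hsuc[of n] by (simp add: D_def)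
  have init: "A 0 = a" "B 0 = b" "C 0 = c" "D 0 = d" by (simp_all add: A_def B_def C_def D_def h_def)
  define Y where "Y n = A n * B n * C n * D n" for n
  have BC: "B (Suc n) * C (Suc n) = - Y n * mu^2" for n
    by (simp add: Y_def rB rC power2_eq_square algebra_simps)
  have YS: "Y (Suc n) = - Y n * mu^2 * (1 - Y n * mu^2)" for n
  proof -
    have "A (Suc n) * D (Suc n) = 1 + B (Suc n) * C (Suc n)" using det[of "Suc n"] by (simp add: algebra_simps)
    moreover have "Y (Suc n) = (A (Suc n) * D (Suc n)) * (B (Suc n) * C (Suc n))" by (simp add: Y_def algebra_simps)
    ultimately have "Y (Suc n) = (1 + B (Suc n) * C (Suc n)) * (B (Suc n) * C (Suc n))" by simp
    also have "\<dots> = (1 + (- Y n * mu^2)) * (- Y n * mu^2)" by (simp only: BC)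
    finally show ?thesis by (simp add: algebra_simps)
  qed
  show False
  proof (cases "\<forall>n. Y n \<noteq> 0")
    case True
    obtain K r where Kr: "r < 1" and bnd: "\<And>n. cmod (A(2*n+1) - lam) + cmod (inverse lam ^(2*n) * B(2*n+1))
           + cmod (lam^(2*n) * C(2*n+1)) + cmod (D(2*n+1) - inverse lam) \<le> K * r^n"
    proof -
      have "\<exists>K r. r < 1 \<and> (\<forall>n. cmod (A(2*n+1) - lam) + cmod (inverse lam ^(2*n) * B(2*n+1))
           + cmod (lam^(2*n) * C(2*n+1)) + cmod (D(2*n+1) - inverse lam) \<le> K * r^n)"
        apply (rule core_bounds[of lam mu A B C D])
        using assms(1) m1 qh det rA rB rC rD by (simp_all add: init mu_def il_def)
      thus ?thesis using that by blast
    qed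
    define S where "S n = dg (il^n) ** Hs g h (2*n+1) ** dg (inverse (il^n))" for n
    have il0: "il \<noteq> 0" using lam0 by (simp add: il_def)
    have Seq: "S n = mat2 (A(2*n+1)) (il^(2*n) * B(2*n+1)) (lam^(2*n) * C(2*n+1)) (D(2*n+1))" for n
      unfolding S_def Heta using il0 dg_conj[of "il^n"]
      by (simp add: power_mult mult.commute il_def power_inverse)
    have SG: "S n \<in> G" for n
    proof -
      have "dg (inverse (il^n)) = dg (lam^n)" by (simp add: il_def power_inverse)
      thus ?thesis unfolding S_def G_def using gen_mult dgi dgl HG unfolding G_def by metis
    qed
    have Sne: "S n \<noteq> g" for n
    proof
      assume "S n = g"
      hence "il^(2*n) * B(2*n+1) = 0" by (simp add: Seq g_def mat2_eq_iff)
      hence "B (Suc (2*n)) = 0" using il0 by simp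
      hence "Y (2*n) = 0" using BC[of "2*n"] mu0 by simp
      thus False using True by blast
    qed
    have Sd: "dist (S n) g \<le> K * r^n" for n
    proof -
      have "dist (S n) g \<le> cmod (A(2*n+1) - lam) + cmod (il^(2*n) * B(2*n+1) - 0)
           + cmod (lam^(2*n) * C(2*n+1) - 0) + cmod (D(2*n+1) - il)"
        unfolding Seq g_def il_def by (rule dist_mat2)
      thus ?thesis using bnd[of n] by (simp add: il_def)
    qed
    show False using nondisc[OF disc gG SG Sne Sd Kr] .
  next
    case False
    then obtain N where "Y N = 0" by blast
    then obtain k where k: "Y k * mu^2 = 1"
      using Y_zero_ex[of Y mu N] YS abcd0 mu0 by (auto simp: Y_def init)
    define a' where "a' = A (Suc k)"
    define b' where "b' = B (Suc k)"
    define c' where "c' = C (Suc k)"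
    define d' where "d' = D (Suc k)"
    have x1: "b' * c' = -1" using BC[of k] k by (simp add: b'_def c'_def)
    have ad0: "a' * d' = 0" using det[of "Suc k"] x1 by (simp add: a'_def b'_def c'_def d'_def algebra_simps)
    have trc: "a' + d' = lam + il" by (simp add: a'_def d'_def rA rD)
    have H2: "Hs g h (Suc (Suc k)) = mat2 il (- a' * b' * mu) (c' * d' * mu) lam"
      using Hsuc[of "Suc k"] x1 by (simp add: a'_def b'_def c'_def d'_def mu_def)
    have lr: "1 / (cmod lam)^2 < 1"
    proof -
      have "1 < (cmod lam)^2" using assms(1) by (simp add: power2_eq_square less_1_mult)
      thus ?thesis by (simp add: divide_less_eq)
    qed
    have b'0: "b' \<noteq> 0" "c' \<noteq> 0" using x1 by auto
    have gi: "dg il = mat2 il 0 0 lam" by (simp add: dg_def il_def)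
    show False
    proof (cases "a' = 0")
      case True
      hence d'0: "d' \<noteq> 0" using trc tr0 by simp
      define c'' where "c'' = c' * d' * mu"
      have c''0: "c'' \<noteq> 0" using d'0 b'0 mu0 by (simp add: c''_def)
      define S where "S n = dg (lam^n) ** Hs g h (Suc (Suc k)) ** dg (inverse (lam^n))" for n
      have Seq: "S n = mat2 il 0 (c'' * inverse (lam^n)^2) lam" for n
        unfolding S_def H2 using lam0 dg_conj[of "lam^n"] True by (simp add: c''_def)
      have SG: "S n \<in> G" for n
      proof -
        have "dg (inverse (lam^n)) = dg (il^n)" by (simp add: il_def power_inverse)
        thus ?thesis unfolding S_def using gen_mult dgi dgl HG unfolding G_def by metis
      qed
      have Sne: "S n \<noteq> dg il" for n using c''0 lam0 by (simp add: Seq gi mat2_eq_iff)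
      have Sd: "dist (S n) (dg il) \<le> cmod c'' * (1 / (cmod lam)^2)^n" for n
      proof -
        have "dist (S n) (dg il) \<le> cmod (il - il) + cmod (0 - 0) + cmod (c'' * inverse (lam^n)^2 - 0) + cmod (lam - lam)"
          unfolding Seq gi by (rule dist_mat2)
        thus ?thesis by (simp add: norm_mult norm_power norm_inverse power_mult_distrib
             power_one_over power_mult[symmetric] mult.commute divide_inverse power_inverse)
      qed
      show False using nondisc[OF disc giG SG Sne Sd lr] .
    next
      case False
      hence a'0: "a' \<noteq> 0" .
      hence d'0: "d' = 0" using ad0 by simp
      define b'' where "b'' = - a' * b' * mu"
      have b''0: "b'' \<noteq> 0" using a'0 b'0 mu0 by (simp add: b''_def)
      define S where "S n = dg (il^n) ** Hs g h (Suc (Suc k)) ** dg (inverse (il^n))" for n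
      have il0: "il \<noteq> 0" using lam0 by (simp add: il_def)
      have Seq: "S n = mat2 il ((il^n)^2 * b'') 0 lam" for n
        unfolding S_def H2 using il0 dg_conj[of "il^n"] d'0 by (simp add: b''_def)
      have SG: "S n \<in> G" for n
      proof -
        have "dg (inverse (il^n)) = dg (lam^n)" by (simp add: il_def power_inverse)
        thus ?thesis unfolding S_def using gen_mult dgi dgl HG unfolding G_def by metis
      qed
      have Sne: "S n \<noteq> dg il" for n using b''0 il0 by (simp add: Seq gi mat2_eq_iff)
      have Sd: "dist (S n) (dg il) \<le> cmod b'' * (1 / (cmod lam)^2)^n" for n
      proof -
        have "dist (S n) (dg il) \<le> cmod (il - il) + cmod ((il^n)^2 * b'' - 0) + cmod (0 - 0) + cmod (lam - lam)"
          unfolding Seq gi by (rule dist_mat2)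
        thus ?thesis by (simp add: il_def norm_mult norm_power norm_inverse power_mult_distrib
             power_one_over power_mult[symmetric] mult.commute divide_inverse power_inverse)
      qed
      show False using nondisc[OF disc giG SG Sne Sd lr] .
    qed
  qed
qed


end
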